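(* Let $T$ be dependent and $\kappa$ regular $>|T|$. Assume $N\prec\mathfrak C$ is $\kappa$-saturated, $A\subseteq\mathfrak C$ with $|A|<\kappa$, for every finite tuple $\bar a$ from $A$ the type $\mathrm{tp}(\bar a,N)$ belongs to $\mathbf S^{\mathrm{nsp},<\omega}_{\ge\kappa}(N)$, and the structure $N_{[A]}$ has elimination of quantifiers. Then $N_{[A]}$ is $\kappa$-saturated.
   Context: $T$ is a complete first-order theory, $\mathfrak C$ its monster model; types computed in $\mathfrak C$. A type $p$ does not split over $B$ if whenever $\varphi(\bar x,\bar b),\neg\varphi(\bar x,\bar c)\in p$ then $\mathrm{tp}(\bar b,B)\ne\mathrm{tp}(\bar c,B)$. Complete types $p,q$ over $A$ are weakly orthogonal if for all realizations $\bar a_1,\bar a_2$ of $p$ and $\bar b_1,\bar b_2$ of $q$, $\mathrm{tp}(\bar a_1{}^\frown\bar b_1,A)=\mathrm{tp}(\bar a_2{}^\frown\bar b_2,A)$. $\mathbf S^{\mathrm{nsp}}_{<\kappa}(N)$ is the set of complete finitary types over $N$ not splitting over some subset of $N$ of size $<\kappa$; $\mathbf S^{\mathrm{nsp},<\omega}_{\ge\kappa}(N)$ is the set of complete finitary types over $N$ weakly orthogonal to every member of $\mathbf S^{\mathrm{nsp}}_{<\kappa}(N)$. $N_{[A]}$ is $N$ expanded by a relation $R_{\varphi(\bar x,\bar b)}=\{\bar a\in{}^{\ell g(\bar x)}N:\mathfrak C\models\varphi[\bar a,\bar b]\}$ for each formula $\varphi(\bar x,\bar y)$ and $\bar b$ from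 $A$. *)

theory Defs
  imports Main
begin

datatype 'f trm = Var nat | Fn 'f "'f trm list"

datatype ('f, 'r) fm =
    FF
  | Eq "'f trm" "'f trm"
  | Rel 'r "'f trm list"
  | Neg "('f, 'r) fm"
  | Conj "('f, 'r) fm" "('f, 'r) fm"
  | Ex nat "('f, 'r) fm"

record ('f, 'r) lang =
  Fs :: "'f set"
  Rs :: "'r set"
  af :: "'f \<Rightarrow> nat"
  ar :: "'r \<Rightarrow> nat"

record ('u, 'f, 'r) struc =
  univ :: "'u set"
  fn :: "'f \<Rightarrow> 'u list \<Rightarrow> 'u"
  rl :: "'r \<Rightarrow> 'u list \<Rightarrow> bool"

fun wf_trm :: "('f, 'r) lang \<Rightarrow> 'f trm \<Rightarrow> bool" where
  "wf_trm L (Var i) = True"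
| "wf_trm L (Fn f ts) = (f \<in> Fs L \<and> length ts = af L f \<and> (\<forall>t\<in>set ts. wf_trm L t))"

fun wf :: "('f, 'r) lang \<Rightarrow> ('f, 'r) fm \<Rightarrow> bool" where
  "wf L FF = True"
| "wf L (Eq s t) = (wf_trm L s \<and> wf_trm L t)"
| "wf L (Rel r ts) = (r \<in> Rs L \<and> length ts = ar L r \<and> (\<forall>t\<in>set ts. wf_trm L t))"
| "wf L (Neg \<phi>) = wf L \<phi>"
| "wf L (Conj \<phi> \<psi>) = (wf L \<phi> \<and> wf L \<psi>)"
| "wf L (Ex x \<phi>) = wf L \<phi>"

fun fv_trm :: "'f trm \<Rightarrow> nat set" where
  "fv_trm (Var i) = {i}"
| "fv_trm (Fn f ts) = (\<Union>t\<in>set ts. fv_trm t)"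

fun fv :: "('f, 'r) fm \<Rightarrow> nat set" where
  "fv FF = {}"
| "fv (Eq s t) = fv_trm s \<union> fv_trm t"
| "fv (Rel r ts) = (\<Union>t\<in>set ts. fv_trm t)"
| "fv (Neg \<phi>) = fv \<phi>"
| "fv (Conj \<phi> \<psi>) = fv \<phi> \<union> fv \<psi>"
| "fv (Ex x \<phi>) = fv \<phi> - {x}"

fun qfree :: "('f, 'r) fm \<Rightarrow> bool" where
  "qfree FF = True"
| "qfree (Eq s t) = True"
| "qfree (Rel r ts) = True"
| "qfree (Neg \<phi>) = qfree \<phi>"
| "qfree (Conj \<phi> \<psi>) = (qfree \<phi> \<and> qfree \<psi>)"
| "qfree (Ex x \<phi>) = False"

fun teval :: "('u, 'f, 'r, 'z) struc_scheme \<Rightarrow> (nat \<Rightarrow> 'u) \<Rightarrow> 'f trm \<Rightarrow> 'u" where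
  "teval M e (Var i) = e i"
| "teval M e (Fn f ts) = fn M f (map (teval M e) ts)"

fun sat :: "('u, 'f, 'r, 'z) struc_scheme \<Rightarrow> (nat \<Rightarrow> 'u) \<Rightarrow> ('f, 'r) fm \<Rightarrow> bool" where
  "sat M e FF = False"
| "sat M e (Eq s t) = (teval M e s = teval M e t)"
| "sat M e (Rel r ts) = rl M r (map (teval M e) ts)"
| "sat M e (Neg \<phi>) = (\<not> sat M e \<phi>)"
| "sat M e (Conj \<phi> \<psi>) = (sat M e \<phi> \<and> sat M e \<psi>)"
| "sat M e (Ex x \<phi>) = (\<exists>a\<in>univ M. sat M (e(x := a)) \<phi>)"

text \<open>M |= phi[xs], variable i interpreted as the i-th entry of xs
  (only used when fv phi is contained in {..<length xs}).\<close>
definition holds :: "('u, 'f, 'r) struc \<Rightarrow> ('f, 'r) fm \<Rightarrow> 'u list \<Rightarrow> bool" where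
  "holds M \<phi> xs = sat M (\<lambda>i. xs ! i) \<phi>"

definition is_struct :: "('f, 'r) lang \<Rightarrow> ('u, 'f, 'r) struc \<Rightarrow> bool" where
  "is_struct L M \<longleftrightarrow> univ M \<noteq> {} \<and>
     (\<forall>f\<in>Fs L. \<forall>xs\<in>lists (univ M). length xs = af L f \<longrightarrow> fn M f xs \<in> univ M)"

definition elem_sub :: "('f, 'r) lang \<Rightarrow> ('u, 'f, 'r) struc \<Rightarrow> ('u, 'f, 'r) struc \<Rightarrow> bool" where
  "elem_sub L N M \<longleftrightarrow> is_struct L N \<and> univ N \<subseteq> univ M \<and>
     (\<forall>\<phi> xs. wf L \<phi> \<and> xs \<in> lists (univ N) \<and> fv \<phi> \<subseteq> {..<length xs} \<longrightarrow>
        (holds N \<phi> xs \<longleftrightarrow> holds M \<phi> xs))"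

text \<open>tp(xs, B) computed in M: formulas phi(xbar, ybar) with parameters ds from B
  (variables 0..length xs - 1 are xbar, the following ones are the parameters).\<close>
definition tp :: "('f, 'r) lang \<Rightarrow> ('u, 'f, 'r) struc \<Rightarrow> 'u list \<Rightarrow> 'u set
      \<Rightarrow> (('f, 'r) fm \<times> 'u list) set" where
  "tp L M xs B = {(\<phi>, ds). wf L \<phi> \<and> ds \<in> lists B \<and> fv \<phi> \<subseteq> {..<length xs + length ds}
                          \<and> holds M \<phi> (xs @ ds)}"

definition saturated :: "('f, 'r) lang \<Rightarrow> ('u, 'f, 'r) struc \<Rightarrow> 'k rel \<Rightarrow> bool" where
  "saturated L M \<kappa> \<longleftrightarrow>
    (\<forall>B p. B \<subseteq> univ M \<and> ordLess2 (card_of B) \<kappa> \<and>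
       (\<forall>(\<phi>, ds)\<in>p. wf L \<phi> \<and> ds \<in> lists B \<and> fv \<phi> \<subseteq> {..<Suc (length ds)}) \<and>
       (\<forall>q. finite q \<and> q \<subseteq> p \<longrightarrow> (\<exists>a\<in>univ M. \<forall>(\<phi>, ds)\<in>q. holds M \<phi> (a # ds)))
     \<longrightarrow> (\<exists>a\<in>univ M. \<forall>(\<phi>, ds)\<in>p. holds M \<phi> (a # ds)))"

definition automorphism :: "('f, 'r) lang \<Rightarrow> ('u, 'f, 'r) struc \<Rightarrow> ('u \<Rightarrow> 'u) \<Rightarrow> bool" where
  "automorphism L M g \<longleftrightarrow> bij_betw g (univ M) (univ M) \<and>
     (\<forall>f\<in>Fs L. \<forall>xs\<in>lists (univ M). length xs = af L f \<longrightarrow> g (fn M f xs) = fn M f (map g xs)) \<and>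
     (\<forall>r\<in>Rs L. \<forall>xs\<in>lists (univ M). length xs = ar L r \<longrightarrow> (rl M r (map g xs) \<longleftrightarrow> rl M r xs))"

definition strongly_homogeneous :: "('f, 'r) lang \<Rightarrow> ('u, 'f, 'r) struc \<Rightarrow> 'k rel \<Rightarrow> bool" where
  "strongly_homogeneous L M \<mu> \<longleftrightarrow>
    (\<forall>D h. D \<subseteq> univ M \<and> h ` D \<subseteq> univ M \<and> ordLess2 (card_of D) \<mu> \<and>
       (\<forall>\<phi> xs. wf L \<phi> \<and> xs \<in> lists D \<and> fv \<phi> \<subseteq> {..<length xs} \<longrightarrow>
          (holds M \<phi> xs \<longleftrightarrow> holds M \<phi> (map h xs)))
     \<longrightarrow> (\<exists>g. automorphism L M g \<and> (\<forall>x\<in>D. g x = h x)))"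

definition monster :: "('f, 'r) lang \<Rightarrow> ('u, 'f, 'r) struc \<Rightarrow> 'k rel \<Rightarrow> bool" where
  "monster L C \<mu> \<longleftrightarrow> is_struct L C \<and> Card_order \<mu> \<and> ordLess2 (card_of {\<phi>. wf L \<phi>}) \<mu> \<and>
     saturated L C \<mu> \<and> strongly_homogeneous L C \<mu>"

definition dependent :: "('f, 'r) lang \<Rightarrow> ('u, 'f, 'r) struc \<Rightarrow> bool" where
  "dependent L C \<longleftrightarrow>
    (\<forall>\<phi> n m. wf L \<phi> \<and> fv \<phi> \<subseteq> {..<n + m} \<longrightarrow>
      \<not> (\<exists>a :: nat \<Rightarrow> 'u list. \<exists>b :: nat set \<Rightarrow> 'u list.
            (\<forall>i. a i \<in> lists (univ C) \<and> length (a i) = n) \<and>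
            (\<forall>w. b w \<in> lists (univ C) \<and> length (b w) = m) \<and>
            (\<forall>i w. holds C \<phi> (a i @ b w) \<longleftrightarrow> i \<in> w)))"

definition does_not_split ::
  "('f, 'r) lang \<Rightarrow> ('u, 'f, 'r) struc \<Rightarrow> (('f, 'r) fm \<times> 'u list) set \<Rightarrow> 'u set \<Rightarrow> bool" where
  "does_not_split L C p B \<longleftrightarrow>
    (\<forall>\<phi> bs cs. (\<phi>, bs) \<in> p \<and> (Neg \<phi>, cs) \<in> p \<longrightarrow> tp L C bs B \<noteq> tp L C cs B)"

definition S_types :: "('f, 'r) lang \<Rightarrow> ('u, 'f, 'r) struc \<Rightarrow> 'u set
      \<Rightarrow> (('f, 'r) fm \<times> 'u list) set set" where
  "S_types L C B = {tp L C as B | as. as \<in> lists (univ C)}"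

definition weakly_orthogonal :: "('f, 'r) lang \<Rightarrow> ('u, 'f, 'r) struc \<Rightarrow> 'u set
      \<Rightarrow> (('f, 'r) fm \<times> 'u list) set \<Rightarrow> (('f, 'r) fm \<times> 'u list) set \<Rightarrow> bool" where
  "weakly_orthogonal L C B p q \<longleftrightarrow>
    (\<forall>a1\<in>lists (univ C). \<forall>a2\<in>lists (univ C). \<forall>b1\<in>lists (univ C). \<forall>b2\<in>lists (univ C).
       tp L C a1 B = p \<and> tp L C a2 B = p \<and> tp L C b1 B = q \<and> tp L C b2 B = q \<longrightarrow>
       tp L C (a1 @ b1) B = tp L C (a2 @ b2) B)"

definition S_nsp_lt :: "('f, 'r) lang \<Rightarrow> ('u, 'f, 'r) struc \<Rightarrow> ('u, 'f, 'r) struc \<Rightarrow> 'k rel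
      \<Rightarrow> (('f, 'r) fm \<times> 'u list) set set" where
  "S_nsp_lt L C N \<kappa> = {p \<in> S_types L C (univ N).
      \<exists>B. B \<subseteq> univ N \<and> ordLess2 (card_of B) \<kappa> \<and> does_not_split L C p B}"

definition S_nsp_ge :: "('f, 'r) lang \<Rightarrow> ('u, 'f, 'r) struc \<Rightarrow> ('u, 'f, 'r) struc \<Rightarrow> 'k rel
      \<Rightarrow> (('f, 'r) fm \<times> 'u list) set set" where
  "S_nsp_ge L C N \<kappa> = {p \<in> S_types L C (univ N).
      \<forall>q\<in>S_nsp_lt L C N \<kappa>. weakly_orthogonal L C (univ N) p q}"

text \<open>Relation symbol Inr (phi, n, bs) stands for R_{phi(xbar, bs)} with lg(xbar) = n.\<close>
definition expL :: "('f, 'r) lang \<Rightarrow> 'u set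
      \<Rightarrow> ('f, 'r + (('f, 'r) fm \<times> nat \<times> 'u list)) lang" where
  "expL L A = \<lparr> Fs = Fs L,
     Rs = Inl ` Rs L \<union> Inr ` {(\<phi>, n, bs). wf L \<phi> \<and> bs \<in> lists A \<and> fv \<phi> \<subseteq> {..<n + length bs}},
     af = af L,
     ar = case_sum (ar L) (\<lambda>(\<phi>, n, bs). n) \<rparr>"

definition expN :: "('u, 'f, 'r) struc \<Rightarrow> ('u, 'f, 'r) struc
      \<Rightarrow> ('u, 'f, 'r + (('f, 'r) fm \<times> nat \<times> 'u list)) struc" where
  "expN C N = \<lparr> univ = univ N, fn = fn N,
     rl = case_sum (rl N) (\<lambda>(\<phi>, n, bs) as. holds C \<phi> (as @ bs)) \<rparr>"

definition has_qe :: "('f, 'r) lang \<Rightarrow> ('u, 'f, 'r) struc \<Rightarrow> bool" where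
  "has_qe L M \<longleftrightarrow>
    (\<forall>\<phi>. wf L \<phi> \<longrightarrow> (\<exists>\<psi>. wf L \<psi> \<and> qfree \<psi> \<and> fv \<psi> \<subseteq> fv \<phi> \<and>
        (\<forall>e. (\<forall>i. e i \<in> univ M) \<longrightarrow> (sat M e \<phi> \<longleftrightarrow> sat M e \<psi>))))"

end

theory Submission
  imports Defs
begin


lemma teval_cong: "(\<forall>i\<in>fv_trm t. e i = e' i) \<Longrightarrow> teval M e t = teval M e' t"
proof (induction t)
  case (Fn f ts)
  then have "map (teval M e) ts = map (teval M e') ts" by (auto simp: map_eq_conv)
  then show ?case by (metis teval.simps(2))
qed simp

lemma sat_cong: "(\<forall>i\<in>fv \<phi>. e i = e' i) \<Longrightarrow> sat M e \<phi> = sat M e' \<phi>"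
proof (induction \<phi> arbitrary: e e')
  case (Eq s t) then show ?case using teval_cong[of s e e' M] teval_cong[of t e e' M] by simp
next
  case (Rel r ts)
  have "map (teval M e) ts = map (teval M e') ts"
    using Rel by (auto simp: map_eq_conv intro!: teval_cong)
  then show ?case by (metis sat.simps(3))
next
  case (Ex x \<phi>)
  have "\<And>a. sat M (e(x:=a)) \<phi> = sat M (e'(x:=a)) \<phi>"
    using Ex.prems by (intro Ex.IH) auto
  then show ?case by simp
next
  case (Conj a b)
  have "sat M e a = sat M e' a" "sat M e b = sat M e' b"
    using Conj.prems by (auto intro!: Conj.IH)
  then show ?case by simp
qed auto

fun rn_trm :: "(nat \<Rightarrow> nat) \<Rightarrow> 'f trm \<Rightarrow> 'f trm" where
  "rn_trm \<rho> (Var i) = Var (\<rho> i)"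
| "rn_trm \<rho> (Fn f ts) = Fn f (map (rn_trm \<rho>) ts)"

fun rn :: "(nat \<Rightarrow> nat) \<Rightarrow> ('f,'r) fm \<Rightarrow> ('f,'r) fm" where
  "rn \<rho> FF = FF"
| "rn \<rho> (Eq s t) = Eq (rn_trm \<rho> s) (rn_trm \<rho> t)"
| "rn \<rho> (Rel r ts) = Rel r (map (rn_trm \<rho>) ts)"
| "rn \<rho> (Neg \<phi>) = Neg (rn \<rho> \<phi>)"
| "rn \<rho> (Conj \<phi> \<psi>) = Conj (rn \<rho> \<phi>) (rn \<rho> \<psi>)"
| "rn \<rho> (Ex x \<phi>) = Ex (\<rho> x) (rn \<rho> \<phi>)"

lemma teval_rn: "teval M e (rn_trm \<rho> t) = teval M (\<lambda>i. e (\<rho> i)) t"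
proof (induction t)
  case (Fn f ts)
  then have "map (teval M e \<circ> rn_trm \<rho>) ts = map (teval M (\<lambda>i. e (\<rho> i))) ts" by (auto simp: map_eq_conv comp_def)
  then show ?case by (simp del: map_eq_conv)
qed simp

lemma wf_trm_rn: "wf_trm L (rn_trm \<rho> t) = wf_trm L t"
  by (induction t) auto

lemma fv_trm_rn: "fv_trm (rn_trm \<rho> t) = \<rho> ` fv_trm t"
  by (induction t) auto

lemma wf_rn: "wf L (rn \<rho> \<phi>) = wf L \<phi>"
  by (induction \<phi>) (auto simp: wf_trm_rn)

lemma fv_rn: "inj \<rho> \<Longrightarrow> fv (rn \<rho> \<phi>) = \<rho> ` fv \<phi>"
  by (induction \<phi>) (auto simp: fv_trm_rn image_set_diff image_UN)

lemma sat_rn: "inj \<rho> \<Longrightarrow> sat M e (rn \<rho> \<phi>) = sat M (e \<circ> \<rho>) \<phi>"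
proof (induction \<phi> arbitrary: e)
  case (Rel r ts) then show ?case by (simp add: teval_rn comp_def)
next
  case (Ex x \<phi>)
  have eq: "\<And>a. (e(\<rho> x := a)) \<circ> \<rho> = (e \<circ> \<rho>)(x := a)"
    using Ex.prems by (auto simp: fun_eq_iff inj_eq)
  have "sat M e (rn \<rho> (Ex x \<phi>)) = (\<exists>a\<in>univ M. sat M ((e(\<rho> x := a)) \<circ> \<rho>) \<phi>)"
    using Ex.IH[OF Ex.prems] by (simp add: comp_def)
  also have "\<dots> = sat M (e \<circ> \<rho>) (Ex x \<phi>)" by (simp only: eq sat.simps)
  finally show ?case .
qed (auto simp: teval_rn comp_def)

lemma holds_rn:
  assumes "inj \<rho>" "\<forall>i\<in>fv \<phi>. ys ! \<rho> i = xs ! i"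
  shows "holds M (rn \<rho> \<phi>) ys = holds M \<phi> xs"
  unfolding holds_def using assms by (simp add: sat_rn) (rule sat_cong, auto)

lemma holds_cong:
  assumes "\<forall>i\<in>fv \<phi>. ys ! i = xs ! i"
  shows "holds M \<phi> ys = holds M \<phi> xs"
  unfolding holds_def using assms by (intro sat_cong) auto




fun subs :: "nat \<Rightarrow> 'f trm list \<Rightarrow> ('f,'r) fm \<Rightarrow> ('f,'r) fm" where
  "subs Y [] b = b"
| "subs Y (t#ts) b = Ex Y (Conj (Eq (Var Y) t) (subs (Suc Y) ts b))"

lemma sat_subs:
  assumes "\<forall>t\<in>set ts. fv_trm t \<subseteq> {..<Y} \<and> teval M e t \<in> univ M"
  shows "sat M e (subs Y ts b) =
     sat M (\<lambda>z. if Y \<le> z \<and> z < Y + length ts then teval M e (ts ! (z - Y)) else e z) b"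
  using assms
proof (induction ts arbitrary: Y e)
  case Nil
  show ?case by simp (rule sat_cong, auto)
next
  case (Cons t ts)
  let ?v = "teval M e t"
  let ?e1 = "e(Y := ?v)"
  have tY: "\<And>a. teval M (e(Y:=a)) t = ?v"
    using Cons.prems by (intro teval_cong) auto
  have v: "?v \<in> univ M" using Cons.prems by simp
  have "sat M e (subs Y (t#ts) b) = sat M ?e1 (subs (Suc Y) ts b)"
    using tY v by auto
  also have "\<dots> = sat M (\<lambda>z. if Suc Y \<le> z \<and> z < Suc Y + length ts then teval M ?e1 (ts ! (z - Suc Y)) else ?e1 z) b"
  proof (rule Cons.IH, intro ballI conjI)
    fix t' assume t': "t' \<in> set ts"
    then have "fv_trm t' \<subseteq> {..<Y}" using Cons.prems by auto
    then show "fv_trm t' \<subseteq> {..<Suc Y}" by auto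
    have "teval M ?e1 t' = teval M e t'"
      using Cons.prems t' by (intro teval_cong) auto
    then show "teval M ?e1 t' \<in> univ M" using Cons.prems t' by auto
  qed
  also have "(\<lambda>z. if Suc Y \<le> z \<and> z < Suc Y + length ts then teval M ?e1 (ts ! (z - Suc Y)) else ?e1 z)
     = (\<lambda>z. if Y \<le> z \<and> z < Y + length (t#ts) then teval M e ((t#ts) ! (z - Y)) else e z)"
  proof
    fix z
    show "(if Suc Y \<le> z \<and> z < Suc Y + length ts then teval M ?e1 (ts ! (z - Suc Y)) else ?e1 z)
      = (if Y \<le> z \<and> z < Y + length (t#ts) then teval M e ((t#ts) ! (z - Y)) else e z)"
    proof (cases "z = Y")
      case True then show ?thesis by simp
    next
      case False
      show ?thesis
      proof (cases "Suc Y \<le> z \<and> z < Suc Y + length ts")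
        case True
        then have "ts ! (z - Suc Y) \<in> set ts" by auto
        then have "teval M ?e1 (ts ! (z - Suc Y)) = teval M e (ts ! (z - Suc Y))"
          using Cons.prems by (intro teval_cong) auto
        moreover have "(t#ts) ! (z - Y) = ts ! (z - Suc Y)"
          using True by (simp add: nth_Cons')
        ultimately show ?thesis using True by auto
      next
        case f2: False
        then show ?thesis using False by auto
      qed
    qed
  qed
  finally show ?case .
qed

lemma fv_subs: "fv (subs Y ts b) \<subseteq> (\<Union>t\<in>set ts. fv_trm t) \<union> (fv b - {Y..<Y + length ts})"
proof (induction ts arbitrary: Y)
  case (Cons t ts)
  have "fv (subs (Suc Y) ts b) \<subseteq> (\<Union>t\<in>set ts. fv_trm t) \<union> (fv b - {Suc Y..<Suc Y + length ts})"
    by (rule Cons.IH)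
  then show ?case by auto
qed simp

lemma wf_subs: "wf L (subs Y ts b) = ((\<forall>t\<in>set ts. wf_trm L t) \<and> wf L b)"
  by (induction ts arbitrary: Y) auto

definition rho :: "nat \<Rightarrow> nat \<Rightarrow> nat \<Rightarrow> nat \<Rightarrow> nat" where
  "rho off n lb j = (if n \<le> j \<and> j < n + lb then off + (j - n) else off + lb + j)"

lemma inj_rho: "inj (rho off n lb)"
  unfolding inj_def rho_def by auto

fun tr :: "nat \<Rightarrow> ('f, 'r + (('f, 'r) fm \<times> nat \<times> 'u list)) fm \<Rightarrow> ('f,'r) fm \<times> 'u list" where
  "tr off FF = (FF, [])"
| "tr off (Eq s t) = (Eq s t, [])"
| "tr off (Rel (Inl r) ts) = (Rel r ts, [])"
| "tr off (Rel (Inr (\<phi>, n, bs)) ts) = (subs (off + length bs) ts (rn (rho off n (length bs)) \<phi>), bs)"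
| "tr off (Neg \<phi>) = (Neg (fst (tr off \<phi>)), snd (tr off \<phi>))"
| "tr off (Conj \<phi> \<psi>) = (Conj (fst (tr off \<phi>)) (fst (tr (off + length (snd (tr off \<phi>))) \<psi>)),
      snd (tr off \<phi>) @ snd (tr (off + length (snd (tr off \<phi>))) \<psi>))"
| "tr off (Ex x \<phi>) = (FF, [])"

lemma wf_trm_expL: "wf_trm (expL L A) t = wf_trm L t"
  by (induction t) (auto simp: expL_def)

lemma tr_syn:
  assumes "qfree \<psi>" "wf (expL L A) \<psi>" "fv \<psi> \<subseteq> {..<lo}" "lo \<le> off"
  shows "wf L (fst (tr off \<psi>)) \<and> fv (fst (tr off \<psi>)) \<subseteq> {..<off + length (snd (tr off \<psi>))}
       \<and> set (snd (tr off \<psi>)) \<subseteq> A"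
  using assms
proof (induction off \<psi> rule: tr.induct)
  case (2 off s t)
  then show ?case by (auto simp: wf_trm_expL)
next
  case (3 off r ts)
  have "\<forall>t\<in>set ts. wf_trm L t" using 3 by (simp add: wf_trm_expL)
  moreover have "r \<in> Rs L" "length ts = ar L r" using 3 by (auto simp: expL_def)
  ultimately show ?case using 3 by auto
next
  case (4 off \<phi> n bs ts)
  let ?Y = "off + length bs"
  have w: "wf L \<phi>" "set bs \<subseteq> A" "fv \<phi> \<subseteq> {..<n + length bs}" "length ts = n"
    using 4 by (auto simp: expL_def)
  have w2: "\<forall>t\<in>set ts. wf_trm L t" using 4 by (simp add: wf_trm_expL)
  have "fv (subs ?Y ts (rn (rho off n (length bs)) \<phi>)) \<subseteq> {..<off + length bs}"
  proof -
    have a: "(\<Union>t\<in>set ts. fv_trm t) \<subseteq> {..<off + length bs}" using 4 by auto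
    have "fv (rn (rho off n (length bs)) \<phi>) - {?Y..<?Y + length ts} \<subseteq> {..<off + length bs}"
    proof
      fix z assume z: "z \<in> fv (rn (rho off n (length bs)) \<phi>) - {?Y..<?Y + length ts}"
      then obtain j where j: "j \<in> fv \<phi>" "z = rho off n (length bs) j"
        by (auto simp: fv_rn[OF inj_rho])
      then show "z \<in> {..<off + length bs}"
        using z w unfolding rho_def by (auto split: if_splits)
    qed
    then show ?thesis using fv_subs[of ?Y ts "rn (rho off n (length bs)) \<phi>"] a by blast
  qed
  then show ?case using w w2 by (simp add: wf_subs wf_rn)
next
  case (6 off \<phi> \<psi>)
  let ?l1 = "snd (tr off \<phi>)"
  have h1: "wf L (fst (tr off \<phi>)) \<and> fv (fst (tr off \<phi>)) \<subseteq> {..<off + length ?l1} \<and> set ?l1 \<subseteq> A"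
    by (rule 6(1)) (use 6 in auto)
  have h2: "wf L (fst (tr (off + length ?l1) \<psi>)) \<and> fv (fst (tr (off + length ?l1) \<psi>)) \<subseteq> {..<off + length ?l1 + length (snd (tr (off + length ?l1) \<psi>))}
     \<and> set (snd (tr (off + length ?l1) \<psi>)) \<subseteq> A"
  proof -
    have q: "qfree \<psi>" "wf (expL L A) \<psi>" "fv \<psi> \<subseteq> {..<lo}" "lo \<le> off + length ?l1"
      using "6.prems" by auto
    show ?thesis using "6" q by blast
  qed
  show ?case using h1 h2 by (simp only: tr.simps fst_conv snd_conv wf.simps fv.simps set_append length_append) fastforce
next
  case (5 off \<phi>)
  then show ?case by simp
qed simp_all




declare map_eq_conv[simp del]

lemma teval_fn: "fn M = fn M' \<Longrightarrow> teval M e t = teval M' e t"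
proof (induction t)
  case (Fn f ts)
  then have "map (teval M e) ts = map (teval M' e) ts" by (auto simp: map_eq_conv)
  then show ?case using Fn.prems by (metis teval.simps(2))
qed simp

lemma map_nth_app: "map (\<lambda>i. (xs @ ys) ! i) [0..<length xs] = xs"
  by (rule nth_equalityI) (auto simp: nth_append)

lemma es_fn:
  fixes L :: "('f, 'r) lang"
  assumes es: "elem_sub L N C" and f: "f \<in> Fs L" and xs: "xs \<in> lists (univ N)" "length xs = af L f"
  shows "fn N f xs = fn C f xs"
proof -
  let ?k = "length xs"
  let ?\<phi> = "Eq (Fn f (map Var [0..<?k])) (Var ?k) :: ('f, 'r) fm"
  let ?ys = "xs @ [fn N f xs]"
  have str: "is_struct L N" using es by (simp add: elem_sub_def)
  have inN: "fn N f xs \<in> univ N" using str f xs unfolding is_struct_def by auto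
  have w: "wf L ?\<phi>" using f xs by auto
  have fvs: "fv ?\<phi> \<subseteq> {..<length ?ys}" by auto
  have ys: "?ys \<in> lists (univ N)" using xs inN by auto
  have m: "map (\<lambda>i. ?ys ! i) [0..<?k] = xs" by (rule map_nth_app)
  have "holds N ?\<phi> ?ys" unfolding holds_def using m by (simp add: comp_def)
  then have "holds C ?\<phi> ?ys" using es w fvs ys unfolding elem_sub_def by blast
  then show ?thesis unfolding holds_def using m by (simp add: comp_def)
qed

lemma es_rl:
  fixes L :: "('f, 'r) lang"
  assumes es: "elem_sub L N C" and r: "r \<in> Rs L" and xs: "xs \<in> lists (univ N)" "length xs = ar L r"
  shows "rl N r xs = rl C r xs"
proof -
  let ?k = "length xs"
  let ?\<phi> = "Rel r (map Var [0..<?k]) :: ('f, 'r) fm"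
  have w: "wf L ?\<phi>" using r xs by auto
  have fvs: "fv ?\<phi> \<subseteq> {..<length xs}" by auto
  have m: "map (\<lambda>i. xs ! i) [0..<?k] = xs" by (rule map_nth)
  have "holds N ?\<phi> xs = holds C ?\<phi> xs" using es w fvs xs unfolding elem_sub_def by blast
  then show ?thesis unfolding holds_def using m by (simp add: comp_def)
qed

lemma es_teval:
  assumes es: "elem_sub L N C"
  shows "wf_trm L t \<Longrightarrow> \<forall>i\<in>fv_trm t. e i \<in> univ N \<Longrightarrow>
     teval N e t = teval C e t \<and> teval N e t \<in> univ N"
proof (induction t)
  case (Var i) then show ?case by simp
next
  case (Fn f ts)
  have ih: "\<forall>t\<in>set ts. teval N e t = teval C e t \<and> teval N e t \<in> univ N"
  proof
    fix t assume t: "t \<in> set ts"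
    have "wf_trm L t" "\<forall>i\<in>fv_trm t. e i \<in> univ N" using Fn.prems t by auto
    then show "teval N e t = teval C e t \<and> teval N e t \<in> univ N" using Fn.IH[OF t] by blast
  qed
  then have m: "map (teval N e) ts = map (teval C e) ts" by (auto simp: map_eq_conv)
  have l: "map (teval N e) ts \<in> lists (univ N)" proof -
    have "\<forall>t\<in>set ts. teval N e t \<in> univ N" using ih by blast
    then show ?thesis by auto
  qed
  have f: "f \<in> Fs L" "length (map (teval N e) ts) = af L f" using Fn.prems by auto
  have "fn N f (map (teval N e) ts) = fn C f (map (teval N e) ts)"
    by (rule es_fn[OF es f(1) l f(2)])
  moreover have "fn N f (map (teval N e) ts) \<in> univ N"
    using es f l unfolding elem_sub_def is_struct_def by blast
  ultimately show ?case using m by simp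
qed

lemma fn_expN: "fn (expN C N) = fn N" by (simp add: expN_def)

lemma rl_expN_Inr: "rl (expN C N) (Inr (\<phi>, n, bs)) xs = holds C \<phi> (xs @ bs)"
  by (simp add: expN_def)

lemma rl_expN_Inl: "rl (expN C N) (Inl r) = rl N r"
  by (simp add: expN_def)

lemma univ_expN: "univ (expN C N) = univ N"
  by (simp add: expN_def)

lemma teval_expN: "teval (expN C N) = teval N"
  by (intro ext teval_fn fn_expN)

lemma tr_sem_inr:
  assumes es: "elem_sub L N C"
    and prems: "wf (expL L A) (Rel (Inr (\<phi>, n, bs)) ts)" "fv (Rel (Inr (\<phi>, n, bs)) ts) \<subseteq> {..<lo}" "lo \<le> off"
    "\<forall>i<lo. e i \<in> univ N" "\<forall>k<length bs. e (off + k) = bs ! k"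
  shows "sat (expN C N) e (Rel (Inr (\<phi>, n, bs)) ts) = sat C e (subs (off + length bs) ts (rn (rho off n (length bs)) \<phi>))"
proof -
  let ?lb = "length bs"
  let ?Y = "off + ?lb"
  let ?\<rho> = "rho off n ?lb"
  have w: "wf L \<phi>" "fv \<phi> \<subseteq> {..<n + length bs}" "length ts = n"
    using prems by (auto simp: expL_def)
  have ws: "\<forall>t\<in>set ts. wf_trm L t" using prems by (simp add: wf_trm_expL)
  have fvt: "\<forall>t\<in>set ts. fv_trm t \<subseteq> {..<lo}" using prems by auto
  have ih: "\<forall>t\<in>set ts. teval N e t = teval C e t \<and> teval N e t \<in> univ N"
  proof
    fix t assume t: "t \<in> set ts"
    have "\<forall>i\<in>fv_trm t. e i \<in> univ N" using fvt t prems(4) by blast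
    then show "teval N e t = teval C e t \<and> teval N e t \<in> univ N"
      using es_teval[OF es] ws t by blast
  qed
  then have m: "map (teval N e) ts = map (teval C e) ts" by (auto simp: map_eq_conv)
  have NC: "univ N \<subseteq> univ C" using es by (simp add: elem_sub_def)
  have m2: "map (teval (expN C N) e) ts = map (teval N e) ts"
    by (simp add: teval_expN)
  have lhs: "sat (expN C N) e (Rel (Inr (\<phi>, n, bs)) ts) = holds C \<phi> (map (teval C e) ts @ bs)"
    using m m2 by (simp add: rl_expN_Inr)
  let ?e' = "\<lambda>z. if ?Y \<le> z \<and> z < ?Y + length ts then teval C e (ts ! (z - ?Y)) else e z"
  have "sat C e (subs ?Y ts (rn ?\<rho> \<phi>)) = sat C ?e' (rn ?\<rho> \<phi>)"
  proof (rule sat_subs, intro ballI conjI)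
    fix t assume t: "t \<in> set ts"
    show "fv_trm t \<subseteq> {..<?Y}" using fvt t prems(3) by fastforce
    show "teval C e t \<in> univ C" using ih t NC by auto
  qed
  also have "\<dots> = sat C (?e' \<circ> ?\<rho>) \<phi>" by (rule sat_rn[OF inj_rho])
  also have "\<dots> = holds C \<phi> (map (teval C e) ts @ bs)"
    unfolding holds_def
  proof (rule sat_cong, intro ballI)
    fix j assume j: "j \<in> fv \<phi>"
    then have jl: "j < n + ?lb" using w by auto
    show "(?e' \<circ> ?\<rho>) j = (map (teval C e) ts @ bs) ! j"
    proof (cases "j < n")
      case True
      then show ?thesis using w(3) by (simp add: rho_def nth_append)
    next
      case False
      then have "?\<rho> j = off + (j - n)" using jl by (simp add: rho_def)
      moreover have "e (off + (j - n)) = bs ! (j - n)"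
      proof -
        have k: "j - n < length bs" using jl False by linarith
        show ?thesis using prems(5) k by blast
      qed
      moreover have "\<not> (?Y \<le> off + (j - n))" using jl False by auto
      ultimately show ?thesis using False w(3) by (simp add: nth_append)
    qed
  qed
  finally show ?thesis using lhs by simp
qed

lemma tr_sem:
  assumes es: "elem_sub L N C"
  shows "qfree \<psi> \<Longrightarrow> wf (expL L A) \<psi> \<Longrightarrow> fv \<psi> \<subseteq> {..<lo} \<Longrightarrow> lo \<le> off \<Longrightarrow>
    \<forall>i<lo. e i \<in> univ N \<Longrightarrow> \<forall>k<length (snd (tr off \<psi>)). e (off + k) = snd (tr off \<psi>) ! k \<Longrightarrow>
    sat (expN C N) e \<psi> = sat C e (fst (tr off \<psi>))"
proof (induction \<psi> arbitrary: off)
  case (Eq s t)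
  have ws: "wf_trm L s" "wf_trm L t" using Eq.prems by (auto simp: wf_trm_expL)
  have "\<forall>i\<in>fv_trm s. e i \<in> univ N" "\<forall>i\<in>fv_trm t. e i \<in> univ N" using Eq.prems by auto
  then have "teval N e s = teval C e s" "teval N e t = teval C e t"
    using es_teval[OF es] ws by blast+
  then show ?case by (simp add: teval_fn[OF fn_expN])
next
  case (Rel rr ts)
  show ?case
  proof (cases rr)
    case (Inl r)
    have ws: "\<forall>t\<in>set ts. wf_trm L t" using Rel.prems by (simp add: wf_trm_expL)
    have r: "r \<in> Rs L" "length ts = ar L r" using Rel.prems Inl by (auto simp: expL_def)
    have ih: "\<forall>t\<in>set ts. teval N e t = teval C e t \<and> teval N e t \<in> univ N"
    proof
      fix t assume t: "t \<in> set ts"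
      have "\<forall>i\<in>fv_trm t. e i \<in> univ N" using Rel.prems t by auto
      then show "teval N e t = teval C e t \<and> teval N e t \<in> univ N"
        using es_teval[OF es] ws t by blast
    qed
    then have m: "map (teval N e) ts = map (teval C e) ts" by (auto simp: map_eq_conv)
    have l: "map (teval N e) ts \<in> lists (univ N)" proof -
    have "\<forall>t\<in>set ts. teval N e t \<in> univ N" using ih by blast
    then show ?thesis by auto
  qed
    have "rl N r (map (teval N e) ts) = rl C r (map (teval N e) ts)"
      using es_rl[OF es r(1) l] r by simp
    moreover have "map (teval (expN C N) e) ts = map (teval N e) ts"
      by (simp add: teval_expN)
    ultimately show ?thesis using m Inl by (simp add: rl_expN_Inl)
  next
    case (Inr x)
    obtain \<phi> n bs where x: "x = (\<phi>, n, bs)" by (cases x) auto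
    have e: "\<forall>k<length bs. e (off + k) = bs ! k" using Rel.prems Inr x by simp
    have "sat (expN C N) e (Rel (Inr (\<phi>, n, bs)) ts) = sat C e (subs (off + length bs) ts (rn (rho off n (length bs)) \<phi>))"
      by (rule tr_sem_inr[OF es]) (use Rel.prems Inr x e in auto)
    then show ?thesis using Inr x by simp
  qed
next
  case (Neg \<phi>)
  then show ?case by simp
next
  case (Conj \<phi> \<psi>)
  let ?l1 = "snd (tr off \<phi>)"
  let ?l2 = "snd (tr (off + length ?l1) \<psi>)"
  have e1: "\<forall>k<length ?l1. e (off + k) = ?l1 ! k"
  proof (intro allI impI)
    fix k assume "k < length ?l1"
    then show "e (off + k) = ?l1 ! k" using Conj.prems(6) by (auto simp: nth_append)
  qed
  have e2: "\<forall>k<length ?l2. e (off + length ?l1 + k) = ?l2 ! k"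
  proof (intro allI impI)
    fix k assume "k < length ?l2"
    then show "e (off + length ?l1 + k) = ?l2 ! k" using Conj.prems(6)[rule_format, of "length ?l1 + k"]
      by (auto simp: nth_append add.assoc)
  qed
  have lo2: "lo \<le> off + length ?l1" using Conj.prems by auto
  have "sat (expN C N) e \<phi> = sat C e (fst (tr off \<phi>))"
    by (rule Conj.IH(1)) (use Conj.prems e1 in auto)
  moreover have "sat (expN C N) e \<psi> = sat C e (fst (tr (off + length ?l1) \<psi>))"
    by (rule Conj.IH(2)) (use Conj.prems e2 lo2 in auto)
  ultimately show ?case by simp
qed auto




context includes cardinal_syntax begin

lemma small_mono: "A \<subseteq> B \<Longrightarrow> |B| <o r \<Longrightarrow> |A| <o r"
  using card_of_mono1 ordLeq_ordLess_trans by blast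

lemma small_image: "|A| <o r \<Longrightarrow> |f ` A| <o r"
  using card_of_image ordLeq_ordLess_trans by blast

lemma inf_field:
  assumes "Card_order r" "|UNIV::nat set| <o r"
  shows "\<not> finite (Field r)"
proof -
  have "|UNIV::nat set| \<le>o r" using assms ordLess_imp_ordLeq by blast
  moreover have "r =o |Field r|" using card_of_Field_ordIso[OF assms(1)] ordIso_symmetric by blast
  ultimately have "|UNIV::nat set| \<le>o |Field r|" using ordLeq_ordIso_trans by blast
  then show ?thesis using card_of_ordLeq_infinite by blast
qed

lemma small_finite:
  assumes "Card_order r" "\<not> finite (Field r)" "finite A"
  shows "|A| <o r"
proof (rule finite_ordLess_infinite)
  show "Well_order |A|" by (rule card_of_Well_order)
  show "Well_order r" using assms(1) by (rule card_order_on_well_order_on)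
  show "finite (Field (card_of A))" using assms(3) by (simp only: Field_card_of)
  show "\<not> finite (Field r)" by (rule assms(2))
qed

lemma small_UN:
  assumes "Card_order r" "regularCard r" "\<not> finite (Field r)" "|I| <o r" "\<forall>i\<in>I. |A i| <o r"
  shows "|\<Union>i\<in>I. A i| <o r"
  using card_of_UNION_ordLess_infinite_Field[OF regularCard_stable[OF assms(1,3,2)] assms(1,4,5)] .

lemma small_Times:
  assumes "Card_order r" "regularCard r" "\<not> finite (Field r)" "|A| <o r" "|B| <o r"
  shows "|A \<times> B| <o r"
proof -
  have "A \<times> B = (\<Union>a\<in>A. Pair a ` B)" by auto
  moreover have "|\<Union>a\<in>A. Pair a ` B| <o r"
    by (rule small_UN[OF assms(1-4)]) (use small_image[OF assms(5)] in blast)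
  ultimately show ?thesis by simp
qed

lemma small_lists:
  assumes "Card_order r" "regularCard r" "|UNIV::nat set| <o r" "|A| <o r"
  shows "|lists A| <o r"
proof -
  have inf: "\<not> finite (Field r)" using inf_field assms by blast
  have lev: "|{xs\<in>lists A. length xs = n}| <o r" for n
  proof (induction n)
    case 0
    have "{xs\<in>lists A. length xs = 0} = {[]}" by auto
    then show ?case using small_finite[OF assms(1) inf, of "{[]}"] by simp
  next
    case (Suc n)
    have "{xs\<in>lists A. length xs = Suc n} = (\<lambda>(x,xs). x#xs) ` (A \<times> {xs\<in>lists A. length xs = n})"
    proof
      show "{xs \<in> lists A. length xs = Suc n} \<subseteq> (\<lambda>(x, xs). x # xs) ` (A \<times> {xs \<in> lists A. length xs = n})"
      proof
        fix xs assume "xs \<in> {xs \<in> lists A. length xs = Suc n}"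
        then obtain y ys where yy: "xs = y # ys" "y \<in> A" "ys \<in> lists A" "length ys = n"
          by (cases xs) auto
        then have "(y, ys) \<in> A \<times> {xs \<in> lists A. length xs = n}" by simp
        then show "xs \<in> (\<lambda>(x, xs). x # xs) ` (A \<times> {xs \<in> lists A. length xs = n})"
          using yy(1) by (metis (no_types, lifting) case_prod_conv image_eqI)
      qed
    qed auto
    moreover have "|(\<lambda>(x,xs). x#xs) ` (A \<times> {xs\<in>lists A. length xs = n})| <o r"
      by (rule small_image[OF small_Times[OF assms(1,2) inf assms(4) Suc]])
    ultimately show ?case by simp
  qed
  have e: "lists A = (\<Union>n\<in>UNIV. {xs\<in>lists A. length xs = n})" by auto
  have "|\<Union>n\<in>UNIV. {xs\<in>lists A. length xs = n}| <o r"
    by (rule small_UN[OF assms(1,2) inf assms(3)]) (use lev in blast)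
  then show ?thesis by (subst e)
qed

lemma small_Fpow:
  assumes "Card_order r" "regularCard r" "|UNIV::nat set| <o r" "|A| <o r"
  shows "|{F. F \<subseteq> A \<and> finite F}| <o r"
proof -
  have "{F. F \<subseteq> A \<and> finite F} \<subseteq> set ` lists A"
  proof
    fix F assume "F \<in> {F. F \<subseteq> A \<and> finite F}"
    then obtain xs where "set xs = F" "F \<subseteq> A" using finite_list by blast
    then show "F \<in> set ` lists A" by auto
  qed
  moreover have "|set ` lists A| <o r" by (rule small_image[OF small_lists[OF assms]])
  ultimately show ?thesis by (rule small_mono)
qed

end


definition sh :: "nat \<Rightarrow> nat \<Rightarrow> nat" where
  "sh k j = (if j = 0 then 0 else j + k)"

lemma inj_sh: "inj (sh k)"
  unfolding inj_def sh_def by auto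

lemma holds_app_prefix:
  assumes "fv \<phi> \<subseteq> {..<Suc (length ns)}"
  shows "holds M \<phi> (x # ns @ zs) = holds M \<phi> (x # ns)"
proof (rule holds_cong, intro ballI)
  fix i assume "i \<in> fv \<phi>"
  then have "i < Suc (length ns)" using assms by auto
  then show "(x # ns @ zs) ! i = (x # ns) ! i" by (cases i) (auto simp: nth_append)
qed

lemma holds_sh:
  assumes "fv \<Phi> \<subseteq> {..<Suc (length zs)}"
  shows "holds M (rn (sh (length ns)) \<Phi>) (x # ns @ zs) = holds M \<Phi> (x # zs)"
proof (rule holds_rn[OF inj_sh], intro ballI)
  fix i assume "i \<in> fv \<Phi>"
  show "(x # ns @ zs) ! sh (length ns) i = (x # zs) ! i"
    by (cases i) (auto simp: sh_def nth_append)
qed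

lemma conj_fin:
  fixes L :: "('f,'r) lang" and M1 M2 :: "('u,'f,'r) struc"
  assumes "finite q" "\<forall>(\<phi>,ns)\<in>q. wf L \<phi> \<and> fv \<phi> \<subseteq> {..<Suc (length ns)}"
  shows "\<exists>\<Phi> zs. wf L \<Phi> \<and> fv \<Phi> \<subseteq> {..<Suc (length zs)} \<and> set zs \<subseteq> (\<Union>(\<phi>,ns)\<in>q. set ns) \<and>
     (\<forall>x. (holds M1 \<Phi> (x#zs) = (\<forall>(\<phi>,ns)\<in>q. holds M1 \<phi> (x#ns))) \<and>
          (holds M2 \<Phi> (x#zs) = (\<forall>(\<phi>,ns)\<in>q. holds M2 \<phi> (x#ns))))"
  using assms
proof (induction q rule: finite_induct)
  case empty
  have "wf L (Neg FF) \<and> fv (Neg FF) \<subseteq> {..<Suc (length [])} \<and> set [] \<subseteq> (\<Union>(\<phi>,ns)\<in>{}. set ns) \<and>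
     (\<forall>x. (holds M1 (Neg FF) (x#[]) = (\<forall>(\<phi>,ns)\<in>{}. holds M1 \<phi> (x#ns))) \<and>
          (holds M2 (Neg FF) (x#[]) = (\<forall>(\<phi>,ns)\<in>{}. holds M2 \<phi> (x#ns))))"
    by (simp add: holds_def)
  then show ?case by (intro exI[of _ "Neg FF"] exI[of _ "[]"])
next
  case (insert a q)
  obtain \<phi> ns where a: "a = (\<phi>, ns)" by (cases a)
  have wa: "wf L \<phi>" "fv \<phi> \<subseteq> {..<Suc (length ns)}" using insert.prems a by auto
  obtain \<Phi> zs where IH: "wf L \<Phi>" "fv \<Phi> \<subseteq> {..<Suc (length zs)}" "set zs \<subseteq> (\<Union>(\<phi>,ns)\<in>q. set ns)"
     "\<forall>x. (holds M1 \<Phi> (x#zs) = (\<forall>(\<phi>,ns)\<in>q. holds M1 \<phi> (x#ns))) \<and>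
          (holds M2 \<Phi> (x#zs) = (\<forall>(\<phi>,ns)\<in>q. holds M2 \<phi> (x#ns)))"
  proof -
    have "\<forall>(\<phi>,ns)\<in>q. wf L \<phi> \<and> fv \<phi> \<subseteq> {..<Suc (length ns)}" using insert.prems by blast
    from insert.IH[OF this] obtain \<Phi> zs where
      "wf L \<Phi> \<and> fv \<Phi> \<subseteq> {..<Suc (length zs)} \<and> set zs \<subseteq> (\<Union>(\<phi>,ns)\<in>q. set ns) \<and>
     (\<forall>x. (holds M1 \<Phi> (x#zs) = (\<forall>(\<phi>,ns)\<in>q. holds M1 \<phi> (x#ns))) \<and>
          (holds M2 \<Phi> (x#zs) = (\<forall>(\<phi>,ns)\<in>q. holds M2 \<phi> (x#ns))))" by (elim exE)
    then show ?thesis using that by (elim conjE)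
  qed
  let ?\<Phi> = "Conj \<phi> (rn (sh (length ns)) \<Phi>)"
  let ?zs = "ns @ zs"
  have w: "wf L ?\<Phi>" using wa IH by (simp add: wf_rn)
  have f: "fv ?\<Phi> \<subseteq> {..<Suc (length ?zs)}"
  proof -
    have "fv (rn (sh (length ns)) \<Phi>) = sh (length ns) ` fv \<Phi>" by (rule fv_rn[OF inj_sh])
    also have "\<dots> \<subseteq> {..<Suc (length ?zs)}" using IH(2) by (auto simp: sh_def)
    finally show ?thesis using wa by auto
  qed
  have s: "set ?zs \<subseteq> (\<Union>(\<phi>,ns)\<in>insert a q. set ns)" using IH(3) a by auto
  have h: "\<forall>x. (holds M1 ?\<Phi> (x#?zs) = (\<forall>(\<phi>,ns)\<in>insert a q. holds M1 \<phi> (x#ns))) \<and>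
          (holds M2 ?\<Phi> (x#?zs) = (\<forall>(\<phi>,ns)\<in>insert a q. holds M2 \<phi> (x#ns)))"
  proof
    fix x
    have c1: "holds M (Conj \<phi> (rn (sh (length ns)) \<Phi>)) (x # ns @ zs) = (holds M \<phi> (x#ns) \<and> holds M \<Phi> (x#zs))"
      for M :: "('u,'f,'r) struc"
      using holds_app_prefix[OF wa(2)] holds_sh[OF IH(2)] by (simp add: holds_def)
    show "(holds M1 ?\<Phi> (x#?zs) = (\<forall>(\<phi>,ns)\<in>insert a q. holds M1 \<phi> (x#ns))) \<and>
          (holds M2 ?\<Phi> (x#?zs) = (\<forall>(\<phi>,ns)\<in>insert a q. holds M2 \<phi> (x#ns)))"
      using c1[of M1] c1[of M2] IH(4)[rule_format, of x] a by simp
  qed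
  show ?case by (intro exI[of _ ?\<Phi>] exI[of _ ?zs] conjI w f s h)
qed

lemma tp_len:
  assumes "tp L C bs B = tp L C cs B"
  shows "length bs = length cs"
proof -
  have key: "(Eq (Var k) (Var k), []) \<in> tp L C xs B \<longleftrightarrow> k < length xs" for k xs
    by (auto simp: tp_def holds_def)
  show ?thesis
  proof (rule ccontr)
    assume "length bs \<noteq> length cs"
    then have "length bs < length cs \<or> length cs < length bs" by auto
    then show False
    proof
      assume "length bs < length cs"
      then show False using key[of "length bs" cs] key[of "length bs" bs] assms by auto
    next
      assume "length cs < length bs"
      then show False using key[of "length cs" cs] key[of "length cs" bs] assms by auto
    qed
  qed
qed

definition mv :: "nat \<Rightarrow> nat \<Rightarrow> nat" where
  "mv n j = (if j = 0 then n else if j \<le> n then j - 1 else j)"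

lemma inj_mv: "inj (mv n)"
  unfolding inj_def mv_def by auto

lemma nsp_fs:
  fixes L :: "('f,'r) lang" and C N :: "('u,'f,'r) struc"
  assumes fs: "\<forall>\<phi> ns. wf L \<phi> \<and> ns \<in> lists (univ N) \<and> fv \<phi> \<subseteq> {..<Suc (length ns)} \<and> holds C \<phi> (c#ns)
      \<longrightarrow> (\<exists>m\<in>M. holds C \<phi> (m#ns))"
  shows "does_not_split L C (tp L C [c] (univ N)) M"
  unfolding does_not_split_def
proof (intro allI impI notI)
  fix \<phi> bs cs
  assume in2: "(\<phi>, bs) \<in> tp L C [c] (univ N) \<and> (Neg \<phi>, cs) \<in> tp L C [c] (univ N)"
  assume eq: "tp L C bs M = tp L C cs M"
  have n: "length bs = length cs" using tp_len[OF eq] .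
  let ?n = "length bs"
  have h1: "wf L \<phi>" "bs \<in> lists (univ N)" "fv \<phi> \<subseteq> {..<Suc ?n}" "holds C \<phi> (c#bs)"
    using in2 by (auto simp: tp_def)
  have h2: "cs \<in> lists (univ N)" "holds C (Neg \<phi>) (c#cs)"
    using in2 by (auto simp: tp_def)
  have fcs: "fv \<phi> \<subseteq> {..<Suc (length cs)}" using h1(3) n by simp
  let ?D = "Conj \<phi> (Neg (rn (sh ?n) \<phi>))"
  have D: "holds C ?D (x # bs @ cs) = (holds C \<phi> (x#bs) \<and> \<not> holds C \<phi> (x#cs))" for x
    using holds_app_prefix[OF h1(3), of C x cs] holds_sh[OF fcs, of C bs x]
    by (simp add: holds_def)
  have wD: "wf L ?D" using h1 by (simp add: wf_rn)
  have fD: "fv ?D \<subseteq> {..<Suc (length (bs @ cs))}"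
  proof -
    have "fv (rn (sh ?n) \<phi>) = sh ?n ` fv \<phi>" by (rule fv_rn[OF inj_sh])
    also have "\<dots> \<subseteq> {..<Suc (length (bs @ cs))}" using fcs n by (auto simp: sh_def)
    finally show ?thesis using h1(3) by auto
  qed
  have hc: "holds C ?D (c # (bs @ cs))" using D h1(4) h2(2) by (simp add: holds_def)
  have l2: "bs @ cs \<in> lists (univ N)" using h1(2) h2(1) by simp
  obtain m where m: "m \<in> M" "holds C ?D (m # (bs @ cs))"
    using fs[rule_format, OF conjI[OF wD conjI[OF l2 conjI[OF fD hc]]]] by blast
  then have m2: "holds C \<phi> (m#bs)" "\<not> holds C \<phi> (m#cs)" using D by auto
  let ?\<phi>' = "rn (mv ?n) \<phi>"
  have mvh: "holds C ?\<phi>' (xs @ [m]) = holds C \<phi> (m # xs)" if "length xs = ?n" for xs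
  proof (rule holds_rn[OF inj_mv], intro ballI)
    fix i assume "i \<in> fv \<phi>"
    then have "i \<le> ?n" using h1(3) by auto
    then show "(xs @ [m]) ! mv ?n i = (m # xs) ! i"
      using that by (cases i) (auto simp: mv_def nth_append)
  qed
  have fv': "fv ?\<phi>' \<subseteq> {..<?n + length [m]}"
  proof -
    have "fv ?\<phi>' = mv ?n ` fv \<phi>" by (rule fv_rn[OF inj_mv])
    also have "\<dots> \<subseteq> {..<?n + length [m]}" using h1(3) by (auto simp: mv_def)
    finally show ?thesis .
  qed
  have "(?\<phi>', [m]) \<in> tp L C bs M"
    using h1(1) m(1) fv' mvh[of bs] m2(1) by (simp add: tp_def wf_rn)
  moreover have "(?\<phi>', [m]) \<notin> tp L C cs M"
    using mvh[of cs] n m2(2) by (simp add: tp_def)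
  ultimately show False using eq by simp
qed

lemma tp_eq_sat:
  assumes "\<forall>(\<phi>,ns)\<in>tp L C [c] B. holds C \<phi> (c'#ns)"
  shows "tp L C [c'] B = tp L C [c] B"
proof
  show "tp L C [c] B \<subseteq> tp L C [c'] B" using assms by (auto simp: tp_def)
  show "tp L C [c'] B \<subseteq> tp L C [c] B"
  proof
    fix x assume x: "x \<in> tp L C [c'] B"
    obtain \<phi> ns where xe: "x = (\<phi>, ns)" by (cases x)
    show "x \<in> tp L C [c] B"
    proof (rule ccontr)
      assume "x \<notin> tp L C [c] B"
      then have "(Neg \<phi>, ns) \<in> tp L C [c] B" using x xe by (auto simp: tp_def holds_def)
      then have "holds C (Neg \<phi>) (c'#ns)" using assms by auto
      then show False using x xe by (auto simp: tp_def holds_def)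
    qed
  qed
qed

definition sw :: "nat \<Rightarrow> nat \<Rightarrow> nat \<Rightarrow> nat" where
  "sw d k i = (if i = 0 then k else if i \<le> d then k + i else if i \<le> d + k then i - d - 1 else i)"

lemma inj_sw: "inj (sw d k)"
proof (rule injI)
  fix a b assume "sw d k a = sw d k b"
  then show "a = b" unfolding sw_def by (simp split: if_splits)
qed

lemma holds_sw:
  assumes "fv \<theta> \<subseteq> {..<Suc (length ds + length l)}"
  shows "holds M (rn (sw (length ds) (length l)) \<theta>) (l @ [x] @ ds) = holds M \<theta> (x # ds @ l)"
proof (rule holds_rn[OF inj_sw], intro ballI)
  fix i assume "i \<in> fv \<theta>"
  then have i: "i \<le> length ds + length l" using assms by auto
  show "(l @ [x] @ ds) ! sw (length ds) (length l) i = (x # ds @ l) ! i"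
  proof (cases "i = 0")
    case True then show ?thesis by (simp add: sw_def nth_append)
  next
    case False
    then obtain j where j: "i = Suc j" by (cases i) auto
    show ?thesis
    proof (cases "i \<le> length ds")
      case True
      then show ?thesis using j by (simp add: sw_def nth_append)
    next
      case f2: False
      have jl: "j - length ds < length l" "length ds \<le> j" using j i f2 by linarith+
      have "sw (length ds) (length l) i = j - length ds" using j i f2 False by (simp add: sw_def)
      then have "(l @ [x] @ ds) ! sw (length ds) (length l) i = l ! (j - length ds)"
        using jl by (simp add: nth_append)
      moreover have "(x # ds @ l) ! i = l ! (j - length ds)" using j jl by (simp add: nth_append)
      ultimately show ?thesis by simp
    qed
  qed
qed

lemma fv_sw:
  assumes "fv \<theta> \<subseteq> {..<Suc (length ds + length l)}"
  shows "fv (rn (sw (length ds) (length l)) \<theta>) \<subseteq> {..<length (l @ [x]) + length ds}"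
proof -
  have "fv (rn (sw (length ds) (length l)) \<theta>) = sw (length ds) (length l) ` fv \<theta>" by (rule fv_rn[OF inj_sw])
  also have "\<dots> \<subseteq> {..<length (l @ [x]) + length ds}" using assms by (auto simp: sw_def)
  finally show ?thesis .
qed




lemma key:
  fixes L :: "('f,'r) lang" and C N :: "('u,'f,'r) struc"
  assumes es: "elem_sub L N C" and fvphi: "fv \<phi> \<subseteq> {..<Suc (length ds)}"
    and ds: "set ds \<subseteq> univ N"
    and psi: "wf (expL L A) \<psi>" "qfree \<psi>" "fv \<psi> \<subseteq> fv \<phi>"
      "\<forall>e. (\<forall>i. e i \<in> univ (expN C N)) \<longrightarrow> (sat (expN C N) e \<phi> = sat (expN C N) e \<psi>)"
    and c: "c \<in> univ N"
  shows "holds (expN C N) \<phi> (c#ds) = holds C (fst (tr (Suc (length ds)) \<psi>)) (c # ds @ snd (tr (Suc (length ds)) \<psi>))"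
proof -
  let ?lo = "Suc (length ds)"
  let ?l = "snd (tr ?lo \<psi>)"
  define e0 where "e0 = (\<lambda>i. if i < ?lo then (c#ds)!i else c)"
  define e1 where "e1 = (\<lambda>i. (c#ds@?l)!i)"
  have cdN: "(c#ds)!i \<in> univ N" if "i < ?lo" for i
    using that ds c by (cases i) auto
  have e0N: "\<forall>i. e0 i \<in> univ (expN C N)"
    using cdN c by (auto simp: e0_def univ_expN)
  have fvpsi: "fv \<psi> \<subseteq> {..<?lo}" using psi(3) fvphi by auto
  have "holds (expN C N) \<phi> (c#ds) = sat (expN C N) e0 \<phi>"
    unfolding holds_def by (rule sat_cong) (use fvphi in \<open>auto simp: e0_def\<close>)
  also have "\<dots> = sat (expN C N) e0 \<psi>" using psi(4) e0N by blast
  also have "\<dots> = sat (expN C N) e1 \<psi>"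
  proof (rule sat_cong, intro ballI)
    fix i assume "i \<in> fv \<psi>"
    then have i: "i < ?lo" using fvpsi by auto
    then show "e0 i = e1 i" unfolding e0_def e1_def by (cases i) (auto simp: nth_append)
  qed
  also have "\<dots> = sat C e1 (fst (tr ?lo \<psi>))"
  proof (rule tr_sem[OF es psi(2) psi(1) fvpsi le_refl])
    show "\<forall>i<?lo. e1 i \<in> univ N"
    proof (intro allI impI)
      fix i assume i: "i < ?lo"
      then have "e1 i = (c#ds)!i" unfolding e1_def by (cases i) (auto simp: nth_append)
      then show "e1 i \<in> univ N" using cdN i by simp
    qed
    show "\<forall>k<length ?l. e1 (?lo + k) = ?l ! k"
      unfolding e1_def by (simp add: nth_append)
  qed
  also have "\<dots> = holds C (fst (tr ?lo \<psi>)) (c # ds @ ?l)" by (simp add: holds_def e1_def)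
  finally show ?thesis .
qed

lemma negs_inj: "(Neg ^^ m) (FF :: ('f,'r) fm) = (Neg ^^ n) FF \<Longrightarrow> m = n"
proof (induction m arbitrary: n)
  case 0 then show ?case by (cases n) auto
next
  case (Suc m) then show ?case by (cases n) auto
qed

lemma nat_small_wf:
  fixes L :: "('f,'r) lang"
  assumes "ordLess2 (card_of {\<phi>. wf L \<phi>}) r"
  shows "ordLess2 (card_of (UNIV::nat set)) r"
proof -
  have wfn: "wf L ((Neg ^^ n) FF)" for n by (induction n) auto
  have "inj (\<lambda>n. (Neg ^^ n) (FF :: ('f,'r) fm))"
    by (rule injI) (rule negs_inj)
  then have "ordLeq3 (card_of (UNIV::nat set)) (card_of {\<phi>. wf L \<phi>})"
    using wfn by (intro card_of_ordLeq[THEN iffD1]) (auto intro!: exI[of _ "\<lambda>n. (Neg ^^ n) FF"])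
  then show ?thesis using assms ordLeq_ordLess_trans by blast
qed

lemma es_holds:
  assumes "elem_sub L N C" "wf L \<phi>" "xs \<in> lists (univ N)" "fv \<phi> \<subseteq> {..<length xs}"
  shows "holds N \<phi> xs = holds C \<phi> xs"
  using assms unfolding elem_sub_def by blast

lemma tp_mem: "((\<phi>, ns) \<in> tp L C xs B) = (wf L \<phi> \<and> ns \<in> lists B \<and> fv \<phi> \<subseteq> {..<length xs + length ns} \<and> holds C \<phi> (xs @ ns))"
  by (simp add: tp_def)

lemma upd0: "(\<lambda>i. (x0 # zs) ! i)(0 := a) = (\<lambda>i. (a # zs) ! i)"
  by (rule ext) (simp add: nth_Cons split: nat.splits)

lemma main_aux:
  fixes L :: "('f,'r) lang" and C N :: "('u,'f,'r) struc" and A :: "'u set"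
    and \<kappa> :: "'k rel" and \<mu> :: "'m rel"
  assumes es: "elem_sub L N C"
    and Ck: "Card_order \<kappa>" and rk: "regularCard \<kappa>" and natk: "ordLess2 (card_of (UNIV::nat set)) \<kappa>"
    and Lk: "ordLess2 (card_of {\<phi>. wf L \<phi>}) \<kappa>" and infk: "\<not> finite (Field \<kappa>)"
    and Cmu: "Card_order \<mu>" and infm: "\<not> finite (Field \<mu>)" and satC: "saturated L C \<mu>"
    and Nmu: "ordLess2 (card_of (univ N)) \<mu>" and Amu: "ordLess2 (card_of A) \<mu>"
    and satN: "saturated L N \<kappa>"
    and AC: "A \<subseteq> univ C" and Ak: "ordLess2 (card_of A) \<kappa>"
    and orth: "\<forall>as\<in>lists A. tp L C as (univ N) \<in> S_nsp_ge L C N \<kappa>"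
    and qe: "has_qe (expL L A) (expN C N)"
    and HB: "B \<subseteq> univ N" and Bk: "ordLess2 (card_of B) \<kappa>"
    and Hp: "\<forall>(\<phi>, ds)\<in>p. wf (expL L A) \<phi> \<and> ds \<in> lists B \<and> fv \<phi> \<subseteq> {..<Suc (length ds)}"
    and Hfs: "\<forall>q. finite q \<and> q \<subseteq> p \<longrightarrow> (\<exists>a\<in>univ N. \<forall>(\<phi>, ds)\<in>q. holds (expN C N) \<phi> (a # ds))"
  shows "\<exists>a\<in>univ N. \<forall>(\<phi>, ds)\<in>p. holds (expN C N) \<phi> (a # ds)"
proof -
  have NC: "univ N \<subseteq> univ C" using es by (simp add: elem_sub_def)
  have strN: "is_struct L N" using es by (simp add: elem_sub_def)
  define Q where "Q \<phi> = (SOME \<psi>. wf (expL L A) \<psi> \<and> qfree \<psi> \<and> fv \<psi> \<subseteq> fv \<phi> \<and>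
      (\<forall>e. (\<forall>i. e i \<in> univ (expN C N)) \<longrightarrow> (sat (expN C N) e \<phi> = sat (expN C N) e \<psi>)))" for \<phi>
  have Qp: "wf (expL L A) (Q \<phi>) \<and> qfree (Q \<phi>) \<and> fv (Q \<phi>) \<subseteq> fv \<phi> \<and>
      (\<forall>e. (\<forall>i. e i \<in> univ (expN C N)) \<longrightarrow> (sat (expN C N) e \<phi> = sat (expN C N) e (Q \<phi>)))"
    if "wf (expL L A) \<phi>" for \<phi>
  proof -
    have "\<exists>\<psi>. wf (expL L A) \<psi> \<and> qfree \<psi> \<and> fv \<psi> \<subseteq> fv \<phi> \<and>
      (\<forall>e. (\<forall>i. e i \<in> univ (expN C N)) \<longrightarrow> (sat (expN C N) e \<phi> = sat (expN C N) e \<psi>))"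
      using qe that unfolding has_qe_def by blast
    then show ?thesis unfolding Q_def by (rule someI_ex)
  qed
  define T where "T = (\<lambda>(\<phi>, ds::'u list). (fst (tr (Suc (length ds)) (Q \<phi>)), ds, snd (tr (Suc (length ds)) (Q \<phi>))))"
  have Tprop: "ds' = ds \<and> wf L \<theta> \<and> fv \<theta> \<subseteq> {..<Suc (length ds + length l)} \<and> set l \<subseteq> A \<and>
      (\<forall>c\<in>univ N. holds (expN C N) \<phi> (c#ds) = holds C \<theta> (c#ds@l))"
    if pd: "(\<phi>, ds) \<in> p" and Te: "T (\<phi>, ds) = (\<theta>, ds', l)" for \<phi> ds \<theta> ds' l
  proof -
    have h: "wf (expL L A) \<phi>" "ds \<in> lists B" "fv \<phi> \<subseteq> {..<Suc (length ds)}" using Hp pd by auto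
    note q = Qp[OF h(1)]
    have te: "\<theta> = fst (tr (Suc (length ds)) (Q \<phi>))" "ds' = ds" "l = snd (tr (Suc (length ds)) (Q \<phi>))"
      using Te by (auto simp: T_def)
    have fvq: "fv (Q \<phi>) \<subseteq> {..<Suc (length ds)}" using q h(3) by blast
    have syn: "wf L \<theta> \<and> fv \<theta> \<subseteq> {..<Suc (length ds) + length l} \<and> set l \<subseteq> A"
      using tr_syn[of "Q \<phi>" L A "Suc (length ds)" "Suc (length ds)"] q fvq te by simp
    have dsN: "set ds \<subseteq> univ N" using h(2) HB by auto
    have "\<forall>c\<in>univ N. holds (expN C N) \<phi> (c#ds) = holds C \<theta> (c#ds@l)"
    proof
      fix c assume c: "c \<in> univ N"
      show "holds (expN C N) \<phi> (c#ds) = holds C \<theta> (c#ds@l)"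
        using key[OF es h(3) dsN conjunct1[OF q] conjunct1[OF conjunct2[OF q]]
            conjunct1[OF conjunct2[OF conjunct2[OF q]]] conjunct2[OF conjunct2[OF conjunct2[OF q]]] c] te
        by simp
    qed
    then show ?thesis using syn te by simp
  qed
  define p' where "p' = T ` p"
  define X where "X = {\<theta>. wf L \<theta>} \<times> lists B \<times> lists A"
  have p'X: "p' \<subseteq> X"
  proof
    fix t assume "t \<in> p'"
    then obtain \<phi> ds where pd: "(\<phi>, ds) \<in> p" "t = T (\<phi>, ds)" unfolding p'_def by auto
    obtain \<theta> ds' l where te: "T (\<phi>, ds) = (\<theta>, ds', l)" by (cases "T (\<phi>, ds)") auto
    have "ds \<in> lists B" using Hp pd by auto
    then show "t \<in> X" using Tprop[OF pd(1) te] pd te unfolding X_def by auto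
  qed
  have Xk: "ordLess2 (card_of X) \<kappa>"
    unfolding X_def
    by (rule small_Times[OF Ck rk infk Lk small_Times[OF Ck rk infk small_lists[OF Ck rk natk Bk] small_lists[OF Ck rk natk Ak]]])
  have p'k: "ordLess2 (card_of p') \<kappa>" by (rule small_mono[OF p'X Xk])
  have wit: "\<exists>m\<in>univ N. \<forall>(\<theta>,ds,l)\<in>F'. holds C \<theta> (m#ds@l)" if F': "F' \<subseteq> p'" "finite F'" for F'
  proof -
    obtain F where F: "F \<subseteq> p" "finite F" "F' = T ` F"
      using finite_subset_image[OF F'(2) F'(1)[unfolded p'_def]] by blast
    obtain a where a: "a \<in> univ N" "\<forall>(\<phi>, ds)\<in>F. holds (expN C N) \<phi> (a # ds)"
      using Hfs F by blast
    have "\<forall>(\<theta>,ds,l)\<in>F'. holds C \<theta> (a#ds@l)"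
    proof (intro ballI, clarify)
      fix \<theta> ds l assume "(\<theta>, ds, l) \<in> F'"
      then obtain x where x: "x \<in> F" "T x = (\<theta>, ds, l)" using F(3) by (metis imageE)
      obtain \<phi> ds0 where xe: "x = (\<phi>, ds0)" by (cases x)
      have pd: "(\<phi>, ds0) \<in> F" "T (\<phi>, ds0) = (\<theta>, ds, l)" using x xe by auto
      have pp: "(\<phi>, ds0) \<in> p" using pd F by auto
      note tp = Tprop[OF pp pd(2)]
      have "holds (expN C N) \<phi> (a # ds0)" using a pd(1) by auto
      then show "holds C \<theta> (a#ds@l)" using tp a(1) by simp
    qed
    then show ?thesis using a(1) by blast
  qed
  define w where "w F' = (SOME m. m \<in> univ N \<and> (\<forall>(\<theta>,ds,l)\<in>F'. holds C \<theta> (m#ds@l)))" for F'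
  have wprop: "w F' \<in> univ N \<and> (\<forall>(\<theta>,ds,l)\<in>F'. holds C \<theta> (w F'#ds@l))" if "F' \<subseteq> p'" "finite F'" for F'
  proof -
    have "\<exists>m. m \<in> univ N \<and> (\<forall>(\<theta>,ds,l)\<in>F'. holds C \<theta> (m#ds@l))" using wit[OF that] by blast
    then show ?thesis unfolding w_def by (rule someI_ex)
  qed
  define M where "M = w ` {F'. F' \<subseteq> p' \<and> finite F'}"
  have MN: "M \<subseteq> univ N" using wprop unfolding M_def by blast
  have Mk: "ordLess2 (card_of M) \<kappa>"
    unfolding M_def by (rule small_image[OF small_Fpow[OF Ck rk natk p'k]])
  define g where "g = (\<lambda>(\<theta>::('f,'r) fm, ds::'u list, l::'u list). (\<theta>, ds @ l))"
  define Sig where "Sig = g ` p' \<union> {(Neg \<phi>, ns) | \<phi> ns. wf L \<phi> \<and> ns \<in> lists (univ N) \<and>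
       fv \<phi> \<subseteq> {..<Suc (length ns)} \<and> (\<forall>m\<in>M. \<not> holds C \<phi> (m#ns))}"
  define D where "D = univ N \<union> A"
  have Dk: "ordLess2 (card_of D) \<mu>" unfolding D_def
    by (rule card_of_Un_ordLess_infinite_Field[OF infm Cmu Nmu Amu])
  have DC: "D \<subseteq> univ C" using NC AC unfolding D_def by auto
  have p'prop: "wf L \<theta> \<and> fv \<theta> \<subseteq> {..<Suc (length ds + length l)} \<and> set l \<subseteq> A \<and> ds \<in> lists B"
    if tin: "(\<theta>, ds, l) \<in> p'" for \<theta> ds l
  proof -
    have "\<exists>x\<in>p. (\<theta>, ds, l) = T x" using tin unfolding p'_def by (rule imageE) blast
    then obtain x where x: "x \<in> p" "T x = (\<theta>, ds, l)" by metis
    obtain \<phi> ds0 where xe: "x = (\<phi>, ds0)" by (cases x)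
    have pd: "(\<phi>, ds0) \<in> p" "T (\<phi>, ds0) = (\<theta>, ds, l)" using x xe by auto
    have d0: "ds0 \<in> lists B" using Hp pd(1) by auto
    have tt: "ds = ds0 \<and> wf L \<theta> \<and> fv \<theta> \<subseteq> {..<Suc (length ds0 + length l)} \<and> set l \<subseteq> A"
      using Tprop[OF pd(1) pd(2)] by blast
    show ?thesis using d0 tt by simp
  qed
  have SigD: "\<forall>(\<phi>, ns)\<in>Sig. wf L \<phi> \<and> ns \<in> lists D \<and> fv \<phi> \<subseteq> {..<Suc (length ns)}"
  proof (intro ballI, clarify)
    fix \<phi> ns assume h: "(\<phi>, ns) \<in> Sig"
    show "wf L \<phi> \<and> ns \<in> lists D \<and> fv \<phi> \<subseteq> {..<Suc (length ns)}"
    proof (cases "(\<phi>, ns) \<in> g ` p'")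
      case True
      then obtain t where t: "t \<in> p'" "g t = (\<phi>, ns)" by (metis imageE)
      obtain \<theta> ds l where te: "t = (\<theta>, ds, l)" by (cases t) auto
      have e: "\<phi> = \<theta>" "ns = ds @ l" using t(2) te unfolding g_def by auto
      have pp: "wf L \<theta>" "fv \<theta> \<subseteq> {..<Suc (length ds + length l)}" "set l \<subseteq> A" "ds \<in> lists B"
        using p'prop t(1) te by auto
      have "set ds \<subseteq> D" using pp(4) HB unfolding D_def by auto
      moreover have "set l \<subseteq> D" using pp(3) unfolding D_def by auto
      ultimately show ?thesis using pp e by auto
    next
      case False
      then have "(\<phi>, ns) \<in> {(Neg \<phi>, ns) | \<phi> ns. wf L \<phi> \<and> ns \<in> lists (univ N) \<and>
       fv \<phi> \<subseteq> {..<Suc (length ns)} \<and> (\<forall>m\<in>M. \<not> holds C \<phi> (m#ns))}"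
        using h unfolding Sig_def by blast
      then obtain \<phi>' where "\<phi> = Neg \<phi>'" "wf L \<phi>'" "ns \<in> lists (univ N)" "fv \<phi>' \<subseteq> {..<Suc (length ns)}"
        by blast
      then show ?thesis unfolding D_def by auto
    qed
  qed
  have Sigfs: "\<forall>q. finite q \<and> q \<subseteq> Sig \<longrightarrow> (\<exists>a\<in>univ C. \<forall>(\<phi>, ns)\<in>q. holds C \<phi> (a # ns))"
  proof (intro allI impI)
    fix q assume q: "finite q \<and> q \<subseteq> Sig"
    have "finite (q \<inter> g ` p')" "q \<inter> g ` p' \<subseteq> g ` p'" using q by auto
    then obtain F' where F': "F' \<subseteq> p'" "finite F'" "q \<inter> g ` p' = g ` F'"
      using finite_subset_image by metis
    let ?m = "w F'"
    have m: "?m \<in> univ N" "\<forall>(\<theta>,ds,l)\<in>F'. holds C \<theta> (?m#ds@l)" using wprop[OF F'(1,2)] by auto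
    have mM: "?m \<in> M" unfolding M_def using F'(1,2) by auto
    have "\<forall>(\<phi>, ns)\<in>q. holds C \<phi> (?m # ns)"
    proof (intro ballI, clarify)
      fix \<phi> ns assume pq: "(\<phi>, ns) \<in> q"
      show "holds C \<phi> (?m # ns)"
      proof (cases "(\<phi>, ns) \<in> g ` p'")
        case True
        then have "(\<phi>, ns) \<in> g ` F'" using F'(3) pq by auto
        then obtain \<theta> ds l where "(\<theta>, ds, l) \<in> F'" "\<phi> = \<theta>" "ns = ds @ l" unfolding g_def by auto
        then show ?thesis using m(2) by auto
      next
        case False
        then obtain \<phi>' where "\<phi> = Neg \<phi>'" "\<forall>m\<in>M. \<not> holds C \<phi>' (m#ns)"
          using pq q unfolding Sig_def by auto
        then show ?thesis using mM by (simp add: holds_def)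
      qed
    qed
    then show "\<exists>a\<in>univ C. \<forall>(\<phi>, ns)\<in>q. holds C \<phi> (a # ns)" using m(1) NC by blast
  qed
  have "\<exists>a\<in>univ C. \<forall>(\<phi>, ns)\<in>Sig. holds C \<phi> (a # ns)"
    by (rule satC[unfolded saturated_def, rule_format, of D Sig]) (intro conjI DC Dk SigD Sigfs)
  then obtain cs where cs: "cs \<in> univ C" "\<forall>(\<phi>, ns)\<in>Sig. holds C \<phi> (cs # ns)" by blast
  have fsM: "\<forall>\<phi> ns. wf L \<phi> \<and> ns \<in> lists (univ N) \<and> fv \<phi> \<subseteq> {..<Suc (length ns)} \<and> holds C \<phi> (cs#ns)
      \<longrightarrow> (\<exists>m\<in>M. holds C \<phi> (m#ns))"
  proof (intro allI impI)
    fix \<phi> ns assume h: "wf L \<phi> \<and> ns \<in> lists (univ N) \<and> fv \<phi> \<subseteq> {..<Suc (length ns)} \<and> holds C \<phi> (cs#ns)"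
    show "\<exists>m\<in>M. holds C \<phi> (m#ns)"
    proof (rule ccontr)
      assume "\<not> (\<exists>m\<in>M. holds C \<phi> (m#ns))"
      then have "(Neg \<phi>, ns) \<in> Sig" using h unfolding Sig_def by blast
      then have "holds C (Neg \<phi>) (cs#ns)" using cs(2) by blast
      then show False using h by (simp add: holds_def)
    qed
  qed
  have nsp: "does_not_split L C (tp L C [cs] (univ N)) M" by (rule nsp_fs[OF fsM])
  have qlt: "tp L C [cs] (univ N) \<in> S_nsp_lt L C N \<kappa>"
    unfolding S_nsp_lt_def S_types_def using cs(1) MN Mk nsp by auto
  have cstheta: "holds C \<theta> (cs#ds@l)" if "(\<theta>, ds, l) \<in> p'" for \<theta> ds l
  proof -
    have "(\<theta>, ds @ l) \<in> Sig" using that unfolding Sig_def g_def by force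
    then show ?thesis using cs(2) by auto
  qed
  have Qex: "\<exists>Q. finite Q \<and> Q \<subseteq> tp L C [cs] (univ N) \<and>
     (\<forall>c'\<in>univ C. (\<forall>(\<phi>,ns)\<in>Q. holds C \<phi> (c'#ns)) \<longrightarrow> holds C \<theta> (c' # ds @ l))"
    if tin: "(\<theta>, ds, l) \<in> p'" for \<theta> ds l
  proof (rule ccontr)
    assume neg: "\<not> ?thesis"
    have negQ: "\<exists>c'\<in>univ C. (\<forall>(\<phi>,ns)\<in>Q. holds C \<phi> (c'#ns)) \<and> \<not> holds C \<theta> (c' # ds @ l)"
      if "finite Q" "Q \<subseteq> tp L C [cs] (univ N)" for Q
    proof (rule ccontr)
      assume "\<not> (\<exists>c'\<in>univ C. (\<forall>(\<phi>,ns)\<in>Q. holds C \<phi> (c'#ns)) \<and> \<not> holds C \<theta> (c' # ds @ l))"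
      then have "\<forall>c'\<in>univ C. (\<forall>(\<phi>,ns)\<in>Q. holds C \<phi> (c'#ns)) \<longrightarrow> holds C \<theta> (c' # ds @ l)" by blast
      then show False using neg that by blast
    qed
    note pp = p'prop[OF tin]
    define Pi where "Pi = tp L C [cs] (univ N) \<union> {(Neg \<theta>, ds @ l)}"
    have PiD: "\<forall>(\<phi>, ns)\<in>Pi. wf L \<phi> \<and> ns \<in> lists D \<and> fv \<phi> \<subseteq> {..<Suc (length ns)}"
      using pp HB unfolding Pi_def D_def tp_def by auto
    have Pifs: "\<forall>q. finite q \<and> q \<subseteq> Pi \<longrightarrow> (\<exists>a\<in>univ C. \<forall>(\<phi>, ns)\<in>q. holds C \<phi> (a # ns))"
    proof (intro allI impI)
      fix q assume q: "finite q \<and> q \<subseteq> Pi"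
      obtain c' where c': "c' \<in> univ C" "\<forall>(\<phi>,ns)\<in>q \<inter> tp L C [cs] (univ N). holds C \<phi> (c'#ns)"
         "\<not> holds C \<theta> (c' # ds @ l)"
        using negQ[of "q \<inter> tp L C [cs] (univ N)"] q by auto
      have "\<forall>(\<phi>, ns)\<in>q. holds C \<phi> (c' # ns)"
      proof (intro ballI, clarify)
        fix \<phi> ns assume pq: "(\<phi>, ns) \<in> q"
        show "holds C \<phi> (c' # ns)"
        proof (cases "(\<phi>, ns) \<in> tp L C [cs] (univ N)")
          case True then show ?thesis using c'(2) pq by auto
        next
          case False
          then have "\<phi> = Neg \<theta>" "ns = ds @ l" using pq q unfolding Pi_def by auto
          then show ?thesis using c'(3) by (simp add: holds_def)
        qed
      qed
      then show "\<exists>a\<in>univ C. \<forall>(\<phi>, ns)\<in>q. holds C \<phi> (a # ns)" using c'(1) by blast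
    qed
    have "\<exists>a\<in>univ C. \<forall>(\<phi>, ns)\<in>Pi. holds C \<phi> (a # ns)"
      by (rule satC[unfolded saturated_def, rule_format, of D Pi]) (intro conjI DC Dk PiD Pifs)
    then obtain c' where c': "c' \<in> univ C" "\<forall>(\<phi>, ns)\<in>Pi. holds C \<phi> (c' # ns)" by blast
    have tpeq: "tp L C [c'] (univ N) = tp L C [cs] (univ N)"
      by (rule tp_eq_sat) (use c'(2) in \<open>auto simp: Pi_def\<close>)
    have nt: "\<not> holds C \<theta> (c' # ds @ l)"
      using c'(2) unfolding Pi_def by (auto simp: holds_def)
    have lA: "l \<in> lists A" using pp by auto
    have "weakly_orthogonal L C (univ N) (tp L C l (univ N)) (tp L C [cs] (univ N))"
      using orth lA qlt unfolding S_nsp_ge_def by blast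
    moreover have "l \<in> lists (univ C)" using lA AC by auto
    moreover have "[cs] \<in> lists (univ C)" "[c'] \<in> lists (univ C)" using cs(1) c'(1) by auto
    ultimately have eqt: "tp L C (l @ [cs]) (univ N) = tp L C (l @ [c']) (univ N)"
      unfolding weakly_orthogonal_def using tpeq by (elim ballE allE impE) (auto simp only:)
    let ?\<chi> = "rn (sw (length ds) (length l)) \<theta>"
    have fvt: "fv \<theta> \<subseteq> {..<Suc (length ds + length l)}" using pp by auto
    have dsN: "ds \<in> lists (univ N)" using pp HB by auto
    have "(?\<chi>, ds) \<in> tp L C (l @ [cs]) (univ N)"
      unfolding tp_mem using pp dsN fv_sw[OF fvt, of cs] holds_sw[OF fvt, of C cs] cstheta[OF tin]
      by (simp add: wf_rn)
    then have "(?\<chi>, ds) \<in> tp L C (l @ [c']) (univ N)" using eqt by simp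
    then have "holds C \<theta> (c' # ds @ l)" unfolding tp_mem using holds_sw[OF fvt, of C c'] by simp
    then show False using nt by simp
  qed
  define Qf where "Qf t = (SOME Q. finite Q \<and> Q \<subseteq> tp L C [cs] (univ N) \<and>
     (\<forall>c'\<in>univ C. (\<forall>(\<phi>,ns)\<in>Q. holds C \<phi> (c'#ns)) \<longrightarrow> holds C (fst t) (c' # fst (snd t) @ snd (snd t))))" for t
  have Qfp: "finite (Qf t) \<and> Qf t \<subseteq> tp L C [cs] (univ N) \<and>
     (\<forall>c'\<in>univ C. (\<forall>(\<phi>,ns)\<in>Qf t. holds C \<phi> (c'#ns)) \<longrightarrow> holds C (fst t) (c' # fst (snd t) @ snd (snd t)))"
    if "t \<in> p'" for t
  proof -
    obtain \<theta> ds l where t: "t = (\<theta>, ds, l)" by (cases t) auto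
    have "\<exists>Q. finite Q \<and> Q \<subseteq> tp L C [cs] (univ N) \<and>
     (\<forall>c'\<in>univ C. (\<forall>(\<phi>,ns)\<in>Q. holds C \<phi> (c'#ns)) \<longrightarrow> holds C (fst t) (c' # fst (snd t) @ snd (snd t)))"
      using Qex[of \<theta> ds l] that t by simp
    then show ?thesis unfolding Qf_def by (rule someI_ex)
  qed
  define P where "P = (\<Union>t\<in>p'. Qf t)"
  have Ptp: "P \<subseteq> tp L C [cs] (univ N)" using Qfp unfolding P_def by blast
  define B2 where "B2 = (\<Union>t\<in>p'. \<Union>x\<in>Qf t. set (snd x))"
  have B2N: "B2 \<subseteq> univ N"
  proof
    fix z assume "z \<in> B2"
    then obtain t x where tx: "t \<in> p'" "x \<in> Qf t" "z \<in> set (snd x)" unfolding B2_def by blast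
    then have "x \<in> tp L C [cs] (univ N)" using Qfp by blast
    then show "z \<in> univ N" using tx(3) by (cases x) (auto simp: tp_def)
  qed
  have B2k: "ordLess2 (card_of B2) \<kappa>"
    unfolding B2_def
  proof (rule small_UN[OF Ck rk infk p'k], intro ballI)
    fix t assume "t \<in> p'"
    then have "finite (Qf t)" using Qfp by blast
    then have "finite (\<Union>x\<in>Qf t. set (snd x))" by auto
    then show "ordLess2 (card_of (\<Union>x\<in>Qf t. set (snd x))) \<kappa>" by (rule small_finite[OF Ck infk])
  qed
  have Pprop: "\<forall>(\<phi>, ns)\<in>P. wf L \<phi> \<and> ns \<in> lists B2 \<and> fv \<phi> \<subseteq> {..<Suc (length ns)}"
  proof (intro ballI, clarify)
    fix \<phi> ns assume "(\<phi>, ns) \<in> P"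
    then obtain t where t: "t \<in> p'" "(\<phi>, ns) \<in> Qf t" unfolding P_def by blast
    then have "(\<phi>, ns) \<in> tp L C [cs] (univ N)" using Qfp by blast
    moreover have "set ns \<subseteq> B2" using t unfolding B2_def by force
    ultimately show "wf L \<phi> \<and> ns \<in> lists B2 \<and> fv \<phi> \<subseteq> {..<Suc (length ns)}" by (auto simp: tp_def)
  qed
  have Pfs: "\<forall>q. finite q \<and> q \<subseteq> P \<longrightarrow> (\<exists>a\<in>univ N. \<forall>(\<phi>, ns)\<in>q. holds N \<phi> (a # ns))"
  proof (intro allI impI)
    fix q assume q: "finite q \<and> q \<subseteq> P"
    have qtp: "q \<subseteq> tp L C [cs] (univ N)" using q Ptp by auto
    have qw: "\<forall>(\<phi>,ns)\<in>q. wf L \<phi> \<and> fv \<phi> \<subseteq> {..<Suc (length ns)}" using qtp by (auto simp: tp_def)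
    obtain \<Phi> zs where cf: "wf L \<Phi>" "fv \<Phi> \<subseteq> {..<Suc (length zs)}" "set zs \<subseteq> (\<Union>(\<phi>,ns)\<in>q. set ns)"
      "\<forall>x. (holds N \<Phi> (x#zs) = (\<forall>(\<phi>,ns)\<in>q. holds N \<phi> (x#ns))) \<and>
          (holds C \<Phi> (x#zs) = (\<forall>(\<phi>,ns)\<in>q. holds C \<phi> (x#ns)))"
      using conj_fin[of q L N C] q qw by blast
    have zsN: "set zs \<subseteq> univ N"
    proof
      fix z assume "z \<in> set zs"
      then obtain \<phi> ns where "(\<phi>, ns) \<in> q" "z \<in> set ns" using cf(3) by auto
      then show "z \<in> univ N" using qtp by (auto simp: tp_def)
    qed
    have "\<forall>(\<phi>,ns)\<in>q. holds C \<phi> (cs#ns)" using qtp by (auto simp: tp_def)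
    then have hC: "holds C \<Phi> (cs#zs)" using cf(4) by blast
    obtain x0 where x0: "x0 \<in> univ N" using strN unfolding is_struct_def by auto
    have "holds C (Ex 0 \<Phi>) (x0#zs)"
      unfolding holds_def using cs(1) hC by (auto simp: upd0 holds_def)
    moreover have "holds N (Ex 0 \<Phi>) (x0#zs) = holds C (Ex 0 \<Phi>) (x0#zs)"
      by (rule es_holds[OF es]) (use cf(1,2) zsN x0 in auto)
    ultimately have "holds N (Ex 0 \<Phi>) (x0#zs)" by simp
    then obtain a where a: "a \<in> univ N" "holds N \<Phi> (a#zs)"
      unfolding holds_def by (auto simp: upd0 holds_def)
    then show "\<exists>a\<in>univ N. \<forall>(\<phi>, ns)\<in>q. holds N \<phi> (a # ns)" using cf(4) by blast
  qed
  have "\<exists>a\<in>univ N. \<forall>(\<phi>, ns)\<in>P. holds N \<phi> (a # ns)"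
    by (rule satN[unfolded saturated_def, rule_format, of B2 P]) (intro conjI B2N B2k Pprop Pfs)
  then obtain c where c: "c \<in> univ N" "\<forall>(\<phi>, ns)\<in>P. holds N \<phi> (c # ns)" by blast
  have cC: "c \<in> univ C" using c(1) NC by auto
  have "\<forall>(\<phi>, ds)\<in>p. holds (expN C N) \<phi> (c # ds)"
  proof (intro ballI, clarify)
    fix \<phi> ds assume pd: "(\<phi>, ds) \<in> p"
    obtain \<theta> ds' l where te: "T (\<phi>, ds) = (\<theta>, ds', l)" by (cases "T (\<phi>, ds)") auto
    note tpr = Tprop[OF pd te]
    have "T (\<phi>, ds) \<in> p'" unfolding p'_def using pd by (rule imageI)
    then have tin: "(\<theta>, ds, l) \<in> p'" using te tpr by simp
    note qf = Qfp[OF tin]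
    have "\<forall>(\<phi>',ns)\<in>Qf (\<theta>, ds, l). holds C \<phi>' (c#ns)"
    proof (intro ballI, clarify)
      fix \<phi>' ns assume h: "(\<phi>', ns) \<in> Qf (\<theta>, ds, l)"
      then have inP: "(\<phi>', ns) \<in> P" using tin unfolding P_def by blast
      have "(\<phi>', ns) \<in> tp L C [cs] (univ N)" using h qf by blast
      then have w: "wf L \<phi>'" "ns \<in> lists (univ N)" "fv \<phi>' \<subseteq> {..<length (c#ns)}" by (auto simp: tp_def)
      have "holds N \<phi>' (c#ns)" using c(2) inP by blast
      then show "holds C \<phi>' (c#ns)" using es_holds[OF es w(1) _ w(3)] w(2) c(1) by simp
    qed
    then have "holds C \<theta> (c # ds @ l)" using qf cC by simp
    then show "holds (expN C N) \<phi> (c # ds)" using tpr c(1) by simp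
  qed
  then show ?thesis using c(1) by blast
qed


theorem mainTheorem4:
  fixes L :: "('f, 'r) lang" and C N :: "('u, 'f, 'r) struc" and A :: "'u set"
    and \<kappa> :: "'k rel" and \<mu> :: "'m rel"
  assumes "monster L C \<mu>"
    and "ordLess2 (card_of (univ N)) \<mu>" and "ordLess2 (card_of A) \<mu>"
    and "dependent L C"
    and "Card_order \<kappa>" and "regularCard \<kappa>"
    and "ordLess2 (card_of {\<phi>. wf L \<phi>}) \<kappa>"
    and "elem_sub L N C" and "saturated L N \<kappa>"
    and "A \<subseteq> univ C" and "ordLess2 (card_of A) \<kappa>"
    and "\<forall>as\<in>lists A. tp L C as (univ N) \<in> S_nsp_ge L C N \<kappa>"
    and "has_qe (expL L A) (expN C N)"
  shows "saturated (expL L A) (expN C N) \<kappa>"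
proof -
  have es: "elem_sub L N C" using assms(8) .
  have Cmu: "Card_order \<mu>" and satC: "saturated L C \<mu>" and Lmu: "ordLess2 (card_of {\<phi>. wf L \<phi>}) \<mu>"
    using assms(1) by (auto simp: monster_def)
  have natk: "ordLess2 (card_of (UNIV::nat set)) \<kappa>" by (rule nat_small_wf[OF assms(7)])
  have natm: "ordLess2 (card_of (UNIV::nat set)) \<mu>" by (rule nat_small_wf[OF Lmu])
  have infk: "\<not> finite (Field \<kappa>)" by (rule inf_field[OF assms(5) natk])
  have infm: "\<not> finite (Field \<mu>)" by (rule inf_field[OF Cmu natm])
  show ?thesis unfolding saturated_def univ_expN
  proof (intro allI impI)
    fix B p
    assume H: "B \<subseteq> univ N \<and> ordLess2 (card_of B) \<kappa> \<and>
       (\<forall>(\<phi>, ds)\<in>p. wf (expL L A) \<phi> \<and> ds \<in> lists B \<and> fv \<phi> \<subseteq> {..<Suc (length ds)}) \<and>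
       (\<forall>q. finite q \<and> q \<subseteq> p \<longrightarrow> (\<exists>a\<in>univ N. \<forall>(\<phi>, ds)\<in>q. holds (expN C N) \<phi> (a # ds)))"
    have HB: "B \<subseteq> univ N" and Bk: "ordLess2 (card_of B) \<kappa>"
      and Hp: "\<forall>(\<phi>, ds)\<in>p. wf (expL L A) \<phi> \<and> ds \<in> lists B \<and> fv \<phi> \<subseteq> {..<Suc (length ds)}"
      and Hfs: "\<forall>q. finite q \<and> q \<subseteq> p \<longrightarrow> (\<exists>a\<in>univ N. \<forall>(\<phi>, ds)\<in>q. holds (expN C N) \<phi> (a # ds))"
      using H by blast+
    show "\<exists>a\<in>univ N. \<forall>(\<phi>, ds)\<in>p. holds (expN C N) \<phi> (a # ds)"
      by (rule main_aux[OF es assms(5) assms(6) natk assms(7) infk Cmu infm satC assms(2) assms(3)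
            assms(9) assms(10) assms(11) assms(12) assms(13) HB Bk Hp Hfs])
  qed
qed

end
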